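(* Let $(W,S)$ be a Coxeter system of finite rank and $S'$ another set of Coxeter generators of $W$ such that $S'\subseteq S^W$ and $S$ is sharp-angled with respect to $S'$. Let $B\subseteq S$ and $B'\subseteq S'$ satisfy $\langle B\rangle=\langle B'\rangle$. Then $B'\subseteq B^{\langle B\rangle}$ and $B$ is sharp-angled with respect to $B'$ (as sets of Coxeter generators of $\langle B\rangle$).
   Context: Coxeter system $(W,S)$: $W=\langle S\mid (st)^{m(s,t)}\ (m(s,t)<\infty)\rangle$, $m(s,s)=1$, $m(s,t)=m(t,s)\in\{2,\dots,\infty\}$; $S$ is a set of Coxeter generators. For a group $G$ and subset $X$, $X^G=\{gxg^{-1}: g\in G, x\in X\}$. If $S'\subseteq S^W$ is another set of Coxeter generators of $W$, $S$ is sharp-angled with respect to $S'$ if for all $s,t\in S$ with $2<m(s,t)<\infty$ there exists $w\in W$ with $w\{s,t\}w^{-1}\subseteq S'$ (for $B,B'$ generating $\langle B\rangle$, the same definition is used with $W$ replaced by $\langle B\rangle$). *)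

theory Defs
  imports "HOL-Algebra.Algebra"
begin

text \<open>Coxeter matrix entry m(s,t): the order of s t in G (0 encodes infinity).\<close>
definition cox_m :: "('a, 'b) monoid_scheme \<Rightarrow> 'a \<Rightarrow> 'a \<Rightarrow> nat" where
  "cox_m G s t = group.ord G (s \<otimes>\<^bsub>G\<^esub> t)"

fun alt_word :: "'a \<Rightarrow> 'a \<Rightarrow> nat \<Rightarrow> 'a list" where
  "alt_word s t 0 = []"
| "alt_word s t (Suc n) = s # alt_word t s n"

text \<open>Coxeter relators (s t)^m(s,t) for m(s,t) finite (includes s s since m(s,s) = 1).\<close>
definition cox_relators :: "('a, 'b) monoid_scheme \<Rightarrow> 'a set \<Rightarrow> 'a list set" where
  "cox_relators G S =
     {alt_word s t (2 * cox_m G s t) | s t. s \<in> S \<and> t \<in> S \<and> cox_m G s t \<noteq> 0}"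

inductive cox_step :: "('a, 'b) monoid_scheme \<Rightarrow> 'a set \<Rightarrow> 'a list \<Rightarrow> 'a list \<Rightarrow> bool"
  for G S where
  "r \<in> cox_relators G S \<Longrightarrow> cox_step G S (u @ v) (u @ r @ v)"

definition cox_equiv :: "('a, 'b) monoid_scheme \<Rightarrow> 'a set \<Rightarrow> 'a list \<Rightarrow> 'a list \<Rightarrow> bool" where
  "cox_equiv G S = (\<lambda>x y. cox_step G S x y \<or> cox_step G S y x)\<^sup>*\<^sup>*"

definition word_prod :: "('a, 'b) monoid_scheme \<Rightarrow> 'a list \<Rightarrow> 'a" where
  "word_prod G w = foldr (\<lambda>x y. monoid.mult G x y) w \<one>\<^bsub>G\<^esub>"

text \<open>(G,S) is a Coxeter system: S is a generating set of involutions such that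
  G has the presentation  < S | (s t)^m(s,t) , m(s,t) finite >,
  i.e. every word in S evaluating to 1 is a consequence of the relators.\<close>
definition coxeter_system :: "('a, 'b) monoid_scheme \<Rightarrow> 'a set \<Rightarrow> bool" where
  "coxeter_system G S \<longleftrightarrow>
     group G \<and> S \<subseteq> carrier G \<and> generate G S = carrier G \<and>
     (\<forall>s\<in>S. s \<otimes>\<^bsub>G\<^esub> s = \<one>\<^bsub>G\<^esub>) \<and>
     (\<forall>w\<in>lists S. word_prod G w = \<one>\<^bsub>G\<^esub> \<longrightarrow> cox_equiv G S w [])"

definition conj_set :: "('a, 'b) monoid_scheme \<Rightarrow> 'a set \<Rightarrow> 'a set" where
  "conj_set G Y = {monoid.mult G (monoid.mult G g x) (m_inv G g) | g x. g \<in> carrier G \<and> x \<in> Y}"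

definition sharp_angled :: "('a, 'b) monoid_scheme \<Rightarrow> 'a set \<Rightarrow> 'a set \<Rightarrow> bool" where
  "sharp_angled G S S' \<longleftrightarrow>
     (\<forall>s\<in>S. \<forall>t\<in>S. 2 < cox_m G s t \<and> cox_m G s t \<noteq> 0 \<longrightarrow>
        (\<exists>w\<in>carrier G. monoid.mult G (monoid.mult G w s) (m_inv G w) \<in> S' \<and>
                        monoid.mult G (monoid.mult G w t) (m_inv G w) \<in> S'))"

end

theory Submission
  imports Defs
begin

definition cj :: "('a,'b) monoid_scheme \<Rightarrow> 'a \<Rightarrow> 'a \<Rightarrow> 'a" where
  "cj G g t = g \<otimes>\<^bsub>G\<^esub> t \<otimes>\<^bsub>G\<^esub> inv\<^bsub>G\<^esub> g"

fun rl :: "('a,'b) monoid_scheme \<Rightarrow> 'a list \<Rightarrow> 'a list" where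
  "rl G [] = []"
| "rl G (a # x) = a # map (cj G a) (rl G x)"

definition par :: "('a,'b) monoid_scheme \<Rightarrow> 'a list \<Rightarrow> 'a \<Rightarrow> bool" where
  "par G x t = odd (count_list (rl G x) t)"

locale coxsys = group G for G (structure) + fixes S assumes cs: "coxeter_system G S"
begin

abbreviation wp where "wp \<equiv> word_prod G"

lemma S_carr: "S \<subseteq> carrier G" using cs unfolding coxeter_system_def by auto
lemma S_sq: "s \<in> S \<Longrightarrow> s \<otimes> s = \<one>" using cs unfolding coxeter_system_def by auto
lemma S_inv: "s \<in> S \<Longrightarrow> inv s = s"
  using S_sq S_carr by (metis inv_equality subsetD)
lemma gen_S: "generate G S = carrier G" using cs unfolding coxeter_system_def by auto

lemma wp_Nil[simp]: "wp [] = \<one>" by (simp add: word_prod_def)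
lemma wp_Cons[simp]: "wp (a # x) = a \<otimes> wp x" by (simp add: word_prod_def)

lemma wp_carr[simp]: "x \<in> lists (carrier G) \<Longrightarrow> wp x \<in> carrier G"
  by (induction x) auto

lemma wp_append: "x \<in> lists (carrier G) \<Longrightarrow> y \<in> lists (carrier G) \<Longrightarrow> wp (x @ y) = wp x \<otimes> wp y"
  by (induction x) (auto simp: m_assoc)

lemma cj_carr[simp]: "g \<in> carrier G \<Longrightarrow> t \<in> carrier G \<Longrightarrow> cj G g t \<in> carrier G"
  by (simp add: cj_def)

lemma cj_cj: "a \<in> carrier G \<Longrightarrow> g \<in> carrier G \<Longrightarrow> t \<in> carrier G \<Longrightarrow> cj G a (cj G g t) = cj G (a \<otimes> g) t"
  by (simp add: cj_def m_assoc inv_mult_group)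

lemma cj_one[simp]: "t \<in> carrier G \<Longrightarrow> cj G \<one> t = t"
  by (simp add: cj_def)

lemma cj_eq_iff: "g \<in> carrier G \<Longrightarrow> y \<in> carrier G \<Longrightarrow> t \<in> carrier G \<Longrightarrow> (cj G g y = t) = (y = cj G (inv g) t)"
  unfolding cj_def by (metis inv_inv inv_closed m_assoc m_closed inv_solve_left inv_solve_right)

lemma rl_carr: "x \<in> lists (carrier G) \<Longrightarrow> set (rl G x) \<subseteq> carrier G"
  by (induction x) auto

lemma length_rl[simp]: "length (rl G x) = length x"
  by (induction x) auto

lemma rl_append: "x \<in> lists (carrier G) \<Longrightarrow> y \<in> lists (carrier G) \<Longrightarrow>
   rl G (x @ y) = rl G x @ map (cj G (wp x)) (rl G y)"
proof (induction x)
  case Nil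
  have "map (cj G \<one>) (rl G y) = rl G y" using Nil rl_carr[of y] by (auto intro!: map_idI)
  then show ?case by simp
next
  case (Cons a x)
  have "map (cj G a) (map (cj G (wp x)) (rl G y)) = map (cj G (a \<otimes> wp x)) (rl G y)"
  proof -
    have wpx: "wp x \<in> carrier G" "a \<in> carrier G" using Cons by auto
    show ?thesis using Cons rl_carr[of y] by (auto simp: cj_cj[OF wpx(2) wpx(1)] subsetD)
  qed
  then show ?case using Cons by simp
qed

lemma count_map_cj: "g \<in> carrier G \<Longrightarrow> set ys \<subseteq> carrier G \<Longrightarrow> t \<in> carrier G \<Longrightarrow>
  count_list (map (cj G g) ys) t = count_list ys (cj G (inv g) t)"
  by (induction ys) (auto simp: cj_eq_iff)

lemma par_append: "x \<in> lists (carrier G) \<Longrightarrow> y \<in> lists (carrier G) \<Longrightarrow> t \<in> carrier G \<Longrightarrow>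
  par G (x @ y) t = (par G x t \<noteq> par G y (cj G (inv (wp x)) t))"
  unfolding par_def using rl_carr[of y]
  by (simp add: rl_append count_map_cj)

lemma par_Nil[simp]: "\<not> par G [] t" by (simp add: par_def)

lemma par_single: "par G [a] t = (t = a)" by (simp add: par_def)

lemma rl_nth: "x \<in> lists (carrier G) \<Longrightarrow> i < length x \<Longrightarrow> rl G x ! i = cj G (wp (take i x)) (x ! i)"
proof (induction x arbitrary: i)
  case Nil then show ?case by simp
next
  case (Cons a x)
  show ?case
  proof (cases i)
    case 0 then show ?thesis using Cons by (simp add: cj_def)
  next
    case (Suc j)
    then have "rl G (a # x) ! i = cj G a (rl G x ! j)" using Cons by simp
    also have "\<dots> = cj G a (cj G (wp (take j x)) (x ! j))" using Cons Suc by simp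
    also have "\<dots> = cj G (wp (take i (a # x))) ((a # x) ! i)"
    proof -
      have "take j x \<in> lists (carrier G)" "x ! j \<in> carrier G" using Cons Suc
        by (auto dest: in_set_takeD)
      then show ?thesis using Cons Suc by (simp add: cj_cj)
    qed
    finally show ?thesis .
  qed
qed


lemma alt_swap_pow: "s \<in> carrier G \<Longrightarrow> t \<in> carrier G \<Longrightarrow>
   s \<otimes> (t \<otimes> s) [^] (i::nat) = (s \<otimes> t) [^] i \<otimes> s"
proof (induction i)
  case 0 then show ?case by simp
next
  case (Suc i)
  have "s \<otimes> (t \<otimes> s) [^] Suc i = (s \<otimes> (t \<otimes> s) [^] i) \<otimes> (t \<otimes> s)"
    using Suc.prems by (simp add: m_assoc)
  also have "\<dots> = (s \<otimes> t) [^] i \<otimes> s \<otimes> (t \<otimes> s)" using Suc by (simp only: Suc.IH)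
  also have "\<dots> = (s \<otimes> t) [^] Suc i \<otimes> s" using Suc.prems by (simp add: m_assoc)
  finally show ?case .
qed

lemma rl_alt: "s \<in> S \<Longrightarrow> t \<in> S \<Longrightarrow> rl G (alt_word s t n) = map (\<lambda>i. (s \<otimes> t) [^] i \<otimes> s) [0..<n]"
proof (induction n arbitrary: s t)
  case 0 then show ?case by simp
next
  case (Suc n)
  have sc: "s \<in> carrier G" "t \<in> carrier G" using Suc S_carr by auto
  have "rl G (alt_word s t (Suc n)) = s # map (cj G s) (map (\<lambda>i. (t \<otimes> s) [^] i \<otimes> t) [0..<n])"
    using Suc by simp
  also have "map (cj G s) (map (\<lambda>i. (t \<otimes> s) [^] i \<otimes> t) [0..<n]) = map (\<lambda>i. (s \<otimes> t) [^] Suc i \<otimes> s) [0..<n]"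
  proof -
    have key: "cj G s ((t \<otimes> s) [^] i \<otimes> t) = (s \<otimes> t) [^] Suc i \<otimes> s" for i
    proof -
    have "cj G s ((t \<otimes> s) [^] i \<otimes> t) = s \<otimes> (t \<otimes> s) [^] i \<otimes> t \<otimes> s"
      using sc Suc.prems S_inv by (simp add: cj_def m_assoc)
    also have "\<dots> = (s \<otimes> t) [^] i \<otimes> s \<otimes> t \<otimes> s" using alt_swap_pow[OF sc] by simp
    also have "\<dots> = (s \<otimes> t) [^] Suc i \<otimes> s" using sc by (simp add: m_assoc)
    finally show ?thesis .
    qed
    show ?thesis by (simp add: key)
  qed
  finally show ?case using sc by (simp add: map_upt_Suc del: upt_Suc)
qed

lemma wp_alt: "s \<in> S \<Longrightarrow> t \<in> S \<Longrightarrow> wp (alt_word s t (2 * k)) = (s \<otimes> t) [^] k"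
proof (induction k)
  case 0 then show ?case by simp
next
  case (Suc k)
  have sc: "s \<in> carrier G" "t \<in> carrier G" using Suc S_carr by auto
  have "alt_word s t (2 * Suc k) = s # t # alt_word s t (2 * k)"
    by (simp add: numeral_2_eq_2)
  then have "wp (alt_word s t (2 * Suc k)) = s \<otimes> (t \<otimes> (s \<otimes> t) [^] k)" using Suc by simp
  also have "\<dots> = (s \<otimes> t) \<otimes> (s \<otimes> t) [^] k" using sc by (simp add: m_assoc)
  also have "\<dots> = (s \<otimes> t) [^] Suc k" using sc by (simp only: nat_pow_Suc2 m_closed)
  finally show ?case .
qed

lemma alt_lists: "s \<in> S \<Longrightarrow> t \<in> S \<Longrightarrow> alt_word s t n \<in> lists S"
  by (induction n arbitrary: s t) auto

lemma count_periodic: assumes "\<And>i. f (i + m) = f i"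
  shows "count_list (map f [0..<2*m]) x = 2 * count_list (map f [0..<m]) x"
proof -
  have "[0..<2*m] = [0..<m] @ [m..<m+m]" using upt_add_eq_append[of 0 m m] by (simp add: mult_2)
  moreover have "map f [m..<m+m] = map f [0..<m]"
  proof -
    have "[m..<m+m] = map (\<lambda>i. i + m) [0..<m]" by (simp add: map_add_upt add.commute)
    then show ?thesis using assms by simp
  qed
  ultimately show ?thesis by simp
qed

lemma relator: assumes "r \<in> cox_relators G S"
  shows "wp r = \<one>" "\<not> par G r x" "r \<in> lists S"
proof -
  obtain s t where st: "r = alt_word s t (2 * cox_m G s t)" "s \<in> S" "t \<in> S"
    using assms unfolding cox_relators_def by auto
  have sc: "s \<otimes> t \<in> carrier G" using st S_carr by auto
  let ?m = "ord (s \<otimes> t)"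
  have cm: "cox_m G s t = ?m" by (simp add: cox_m_def)
  show "wp r = \<one>" using st wp_alt cm sc by simp
  show "r \<in> lists S" using st alt_lists by simp
  have "count_list (rl G r) x = 2 * count_list (map (\<lambda>i. (s \<otimes> t) [^] i \<otimes> s) [0..<?m]) x"
    unfolding st(1) cm rl_alt[OF st(2,3)]
  proof (rule count_periodic)
    fix i
    have "(s \<otimes> t) [^] (i + ?m) = (s \<otimes> t) [^] i" using sc by (simp flip: nat_pow_mult)
    then show "(s \<otimes> t) [^] (i + ?m) \<otimes> s = (s \<otimes> t) [^] i \<otimes> s" by simp
  qed
  then show "\<not> par G r x" unfolding par_def by (metis dvd_triv_left)
qed


lemma S_lists_carr: "x \<in> lists S \<Longrightarrow> x \<in> lists (carrier G)"
  using S_carr by auto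

lemma step_pres: assumes "cox_step G S x y" "x \<in> lists S \<or> y \<in> lists S"
  shows "x \<in> lists S \<and> y \<in> lists S \<and> (\<forall>t\<in>carrier G. par G x t = par G y t)"
  using assms
proof cases
  case (1 r u v)
  have rS: "r \<in> lists S" and r1: "wp r = \<one>" and rp: "\<And>z. \<not> par G r z" using relator 1 by auto
  have xy: "x \<in> lists S" "y \<in> lists S" using assms 1 rS by auto
  then have uv: "u \<in> lists (carrier G)" "v \<in> lists (carrier G)" "r \<in> lists (carrier G)"
    using 1 S_carr by auto
  have "par G x t = par G y t" if t: "t \<in> carrier G" for t
  proof -
    let ?t' = "cj G (inv (wp u)) t"
    have tc: "?t' \<in> carrier G" using t uv by simp
    have "par G y t = (par G u t \<noteq> par G (r @ v) ?t')"
      using 1 uv t par_append[of u "r @ v" t] by simp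
    also have "par G (r @ v) ?t' = par G v ?t'"
      using par_append[OF uv(3) uv(2) tc] rp r1 tc by simp
    finally show ?thesis using 1 uv t par_append[of u v t] by simp
  qed
  then show ?thesis using xy by auto
qed

lemma equiv_pres: assumes "cox_equiv G S x y" "x \<in> lists S"
  shows "y \<in> lists S \<and> (\<forall>t\<in>carrier G. par G x t = par G y t)"
  using assms(1) unfolding cox_equiv_def
proof (induction rule: rtranclp_induct)
  case base then show ?case using assms(2) by simp
next
  case (step y z)
  then have "y \<in> lists S \<and> z \<in> lists S \<and> (\<forall>t\<in>carrier G. par G y t = par G z t)"
    using step_pres by blast
  then show ?case using step by auto
qed

lemma wp_rev: "x \<in> lists S \<Longrightarrow> wp (rev x) = inv (wp x)"
proof (induction x)
  case Nil then show ?case by simp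
next
  case (Cons a x)
  have c: "a \<in> carrier G" "x \<in> lists (carrier G)" "rev x \<in> lists (carrier G)" using Cons S_carr by auto
  have "wp (rev (a # x)) = wp (rev x) \<otimes> wp [a]" using c by (simp add: wp_append)
  also have "\<dots> = inv (wp x) \<otimes> inv a" using Cons S_inv c by simp
  also have "\<dots> = inv (a \<otimes> wp x)" using c by (simp add: inv_mult_group)
  finally show ?case by simp
qed

lemma par_one: assumes "x \<in> lists S" "wp x = \<one>" "t \<in> carrier G" shows "\<not> par G x t"
proof -
  have "cox_equiv G S x []" using cs assms unfolding coxeter_system_def by blast
  then show ?thesis using equiv_pres assms by fastforce
qed

lemma par_welldef: assumes "x \<in> lists S" "y \<in> lists S" "wp x = wp y" "t \<in> carrier G"
  shows "par G x t = par G y t"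
proof -
  have c: "x \<in> lists (carrier G)" "y \<in> lists (carrier G)" "rev y \<in> lists (carrier G)"
    using assms S_carr by auto
  have ry: "rev y \<in> lists S" using assms by auto
  let ?P = "wp y"
  have Pc: "?P \<in> carrier G" using c by simp
  let ?t0 = "cj G (inv ?P) t"
  have t0c: "?t0 \<in> carrier G" using Pc assms by simp
  have bk: "cj G (inv (wp (rev y))) ?t0 = t"
    using Pc assms(4) by (simp add: wp_rev[OF assms(2)] cj_cj)
  have e: "wp (rev y @ z) = \<one>" if "z \<in> lists S" "wp z = ?P" for z
  proof -
    have "z \<in> lists (carrier G)" using that S_carr by auto
    then show ?thesis using c(3) wp_rev[OF assms(2)] Pc that by (simp add: wp_append)
  qed
  have "\<not> par G (rev y @ x) ?t0" using par_one[OF _ e t0c] ry assms by auto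
  moreover have "\<not> par G (rev y @ y) ?t0" using par_one[OF _ e t0c] ry assms by auto
  ultimately show ?thesis using par_append[OF c(3) c(1) t0c] par_append[OF c(3) c(2) t0c] bk by auto
qed

lemma gen_words: assumes "A \<subseteq> S" shows "generate G A = {wp x | x. x \<in> lists A}"
proof
  show "generate G A \<subseteq> {wp x | x. x \<in> lists A}"
  proof
    fix h assume "h \<in> generate G A"
    then show "h \<in> {wp x | x. x \<in> lists A}"
    proof induction
      case one have "\<one> = wp []" "[] \<in> lists A" by auto
      then show ?case by blast
    next
      case (incl h) then have "h = wp [h]" "[h] \<in> lists A" using assms S_carr by (auto simp: subsetD)
      then show ?case by blast
    next
      case (inv h) then have "inv h = wp [h]" using assms S_carr S_inv by (auto simp: subsetD)
      moreover have "[h] \<in> lists A" using inv by auto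
      ultimately show ?case by blast
    next
      case (eng h1 h2)
      then obtain x1 x2 where "x1 \<in> lists A" "x2 \<in> lists A" "h1 = wp x1" "h2 = wp x2" by auto
      moreover have "x1 \<in> lists (carrier G)" "x2 \<in> lists (carrier G)"
        using calculation assms S_carr by auto
      ultimately have "h1 \<otimes> h2 = wp (x1 @ x2)" "x1 @ x2 \<in> lists A" by (auto simp: wp_append)
      then show ?case by blast
    qed
  qed
next
  show "{wp x | x. x \<in> lists A} \<subseteq> generate G A"
  proof
    fix h assume "h \<in> {wp x | x. x \<in> lists A}"
    then obtain x where hx: "h = wp x" "x \<in> lists A" by auto
    have "wp x \<in> generate G A" using hx(2)
    proof (induction x)
      case Nil then show ?case by (simp add: generate.one)
    next
      case (Cons a x) then show ?case by (auto intro: generate.eng generate.incl)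
    qed
    then show "h \<in> generate G A" using hx by simp
  qed
qed

definition Ng :: "'a \<Rightarrow> 'a set" where
  "Ng g = {t \<in> carrier G. par G (SOME x. x \<in> lists S \<and> wp x = g) t}"

lemma has_word: "g \<in> carrier G \<Longrightarrow> \<exists>x. x \<in> lists S \<and> wp x = g"
  using gen_words[of S] gen_S by auto

lemma Ng_word: "x \<in> lists S \<Longrightarrow> Ng (wp x) = {t \<in> carrier G. par G x t}"
proof -
  assume x: "x \<in> lists S"
  let ?y = "SOME y. y \<in> lists S \<and> wp y = wp x"
  have "?y \<in> lists S \<and> wp ?y = wp x" by (rule someI[of _ x]) (use x in auto)
  then have "par G ?y t = par G x t" if "t \<in> carrier G" for t
    using par_welldef[of ?y x t] x that by simp
  then show ?thesis unfolding Ng_def by auto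
qed

lemma Ng_mult: assumes "g \<in> carrier G" "h \<in> carrier G" "t \<in> carrier G"
  shows "t \<in> Ng (g \<otimes> h) \<longleftrightarrow> (t \<in> Ng g) \<noteq> (cj G (inv g) t \<in> Ng h)"
proof -
  obtain x y where xy: "x \<in> lists S" "wp x = g" "y \<in> lists S" "wp y = h" using has_word assms by metis
  have c: "x \<in> lists (carrier G)" "y \<in> lists (carrier G)" using xy S_carr by auto
  have "g \<otimes> h = wp (x @ y)" using xy c by (simp add: wp_append)
  then have "Ng (g \<otimes> h) = {t \<in> carrier G. par G (x @ y) t}" using Ng_word xy by simp
  then have "t \<in> Ng (g \<otimes> h) \<longleftrightarrow> par G (x @ y) t" using assms by simp
  also have "\<dots> \<longleftrightarrow> (par G x t \<noteq> par G y (cj G (inv g) t))" using par_append[OF c assms(3)] xy by simp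
  also have "\<dots> \<longleftrightarrow> (t \<in> Ng g) \<noteq> (cj G (inv g) t \<in> Ng h)"
    using Ng_word[OF xy(1)] Ng_word[OF xy(3)] xy assms by simp
  finally show ?thesis .
qed

lemma Ng_sub: "x \<in> lists S \<Longrightarrow> Ng (wp x) \<subseteq> set (rl G x)"
proof
  fix t assume x: "x \<in> lists S" and "t \<in> Ng (wp x)"
  then have "odd (count_list (rl G x) t)" using Ng_word unfolding par_def by auto
  then have "count_list (rl G x) t \<noteq> 0" by (metis even_zero)
  then show "t \<in> set (rl G x)" by (simp add: count_list_0_iff)
qed

lemma Ng_finite: "g \<in> carrier G \<Longrightarrow> finite (Ng g)"
proof -
  assume "g \<in> carrier G"
  then obtain x where "x \<in> lists S" "wp x = g" using has_word by blast
  then have "Ng g \<subseteq> set (rl G x)" using Ng_sub by blast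
  then show ?thesis using finite_subset by blast
qed

lemma Ng_carr: "Ng g \<subseteq> carrier G" unfolding Ng_def by auto

lemma Ng_one: "Ng \<one> = {}"
  using Ng_word[of "[]"] by simp

lemma Ng_gen: "s \<in> S \<Longrightarrow> Ng s = {s}"
proof -
  assume s: "s \<in> S"
  then have "s \<in> carrier G" using S_carr by auto
  then have "wp [s] = s" by simp
  then show ?thesis using Ng_word[of "[s]"] s \<open>s \<in> carrier G\<close> by (auto simp: par_single)
qed


lemma inv_cancel_l[simp]: "x \<in> carrier G \<Longrightarrow> y \<in> carrier G \<Longrightarrow> inv x \<otimes> (x \<otimes> y) = y"
  by (simp flip: m_assoc)
lemma inv_cancel_l2[simp]: "x \<in> carrier G \<Longrightarrow> y \<in> carrier G \<Longrightarrow> x \<otimes> (inv x \<otimes> y) = y"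
  by (simp flip: m_assoc)

lemma take_lists[simp]: "x \<in> lists A \<Longrightarrow> take i x \<in> lists A"
  by (auto dest: in_set_takeD)
lemma drop_lists[simp]: "x \<in> lists A \<Longrightarrow> drop i x \<in> lists A"
  by (auto dest: in_set_dropD)

lemma wp_split: "x \<in> lists (carrier G) \<Longrightarrow> i < length x \<Longrightarrow>
   wp x = wp (take i x) \<otimes> (x ! i \<otimes> wp (drop (Suc i) x))"
proof -
  assume a: "x \<in> lists (carrier G)" "i < length x"
  have "x = take i x @ (x ! i # drop (Suc i) x)" using a by (simp add: id_take_nth_drop)
  then have "wp x = wp (take i x @ (x ! i # drop (Suc i) x))" by simp
  also have "\<dots> = wp (take i x) \<otimes> (x ! i \<otimes> wp (drop (Suc i) x))"
    using a by (subst wp_append) (auto dest: in_set_takeD in_set_dropD)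
  finally show ?thesis .
qed

lemma del_letter: assumes "x \<in> lists S" "i < length x"
  shows "rl G x ! i \<otimes> wp x = wp (take i x @ drop (Suc i) x)"
proof -
  have c: "x \<in> lists (carrier G)" using assms S_carr by auto
  let ?P = "wp (take i x)" and ?a = "x ! i" and ?R = "wp (drop (Suc i) x)"
  have cc: "?P \<in> carrier G" "?a \<in> carrier G" "?R \<in> carrier G"
    using c assms by auto
  have aS: "?a \<in> S" using assms by auto
  have "rl G x ! i \<otimes> wp x = (?P \<otimes> ?a \<otimes> inv ?P) \<otimes> (?P \<otimes> (?a \<otimes> ?R))"
    using rl_nth[OF c assms(2)] wp_split[OF c assms(2)] by (simp add: cj_def)
  also have "\<dots> = ?P \<otimes> (?a \<otimes> ?a) \<otimes> ?R" using cc by (simp add: m_assoc)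
  also have "\<dots> = ?P \<otimes> ?R" using S_sq[OF aS] cc by simp
  also have "\<dots> = wp (take i x @ drop (Suc i) x)"
    using c by (subst wp_append) (auto dest: in_set_takeD in_set_dropD)
  finally show ?thesis .
qed

lemma rl_sq: assumes "x \<in> lists S" "i < length x" shows "rl G x ! i \<otimes> rl G x ! i = \<one>"
proof -
  have c: "x \<in> lists (carrier G)" using assms S_carr by auto
  let ?P = "wp (take i x)" and ?a = "x ! i"
  have cc: "?P \<in> carrier G" "?a \<in> carrier G"
    using c assms by auto
  have aS: "?a \<in> S" using assms by auto
  have "rl G x ! i \<otimes> rl G x ! i = (?P \<otimes> ?a \<otimes> inv ?P) \<otimes> (?P \<otimes> ?a \<otimes> inv ?P)"
    using rl_nth[OF c assms(2)] by (simp add: cj_def)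
  also have "\<dots> = ?P \<otimes> (?a \<otimes> ?a) \<otimes> inv ?P" using cc by (simp add: m_assoc)
  also have "\<dots> = \<one>" using S_sq[OF aS] cc by simp
  finally show ?thesis .
qed

lemma min_distinct: assumes A: "A \<subseteq> S" and x: "x \<in> lists A"
  and mn: "\<And>y. y \<in> lists A \<Longrightarrow> wp y = wp x \<Longrightarrow> length x \<le> length y"
  shows "distinct (rl G x)"
proof (rule ccontr)
  assume "\<not> distinct (rl G x)"
  then obtain i j where ij: "i < j" "j < length x" "rl G x ! i = rl G x ! j"
    by (metis distinct_conv_nth length_rl linorder_neqE_nat)
  have xS: "x \<in> lists S" using x A by auto
  define x' where "x' = take j x @ drop (Suc j) x"
  define x'' where "x'' = take i x' @ drop (Suc i) x'"
  have lx': "length x' = length x - 1" using ij unfolding x'_def by simp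
  have x'A: "x' \<in> lists A" using x unfolding x'_def by (auto dest: in_set_takeD in_set_dropD)
  have x''A: "x'' \<in> lists A" using x'A unfolding x''_def by (auto dest: in_set_takeD in_set_dropD)
  have x'S: "x' \<in> lists S" using x'A A by auto
  have il: "i < length x'" using ij lx' by simp
  have tk: "take i x' = take i x" using ij unfolding x'_def by simp
  have nt: "x' ! i = x ! i" using ij unfolding x'_def by (simp add: nth_append)
  have c: "x \<in> lists (carrier G)" "x' \<in> lists (carrier G)" using xS x'S S_carr by auto
  have rr: "rl G x' ! i = rl G x ! i" using rl_nth[OF c(2) il] rl_nth[OF c(1)] ij tk nt by simp
  let ?t = "rl G x ! i"
  have tc: "?t \<in> carrier G" using rl_carr[OF c(1)] ij by (simp add: subsetD)
  have "wp x'' = ?t \<otimes> wp x'" using del_letter[OF x'S il] rr unfolding x''_def by simp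
  also have "wp x' = ?t \<otimes> wp x" using del_letter[OF xS ij(2)] ij(3) unfolding x'_def by simp
  finally have "wp x'' = (?t \<otimes> ?t) \<otimes> wp x" using tc c by (simp add: m_assoc)
  then have "wp x'' = wp x" using rl_sq[OF xS] ij c by simp
  then have "length x \<le> length x''" using mn x''A by simp
  moreover have "length x'' = length x - 2" using il lx' ij unfolding x''_def by simp
  ultimately show False using ij by simp
qed

lemma distinct_count: "distinct xs \<Longrightarrow> count_list xs t = (if t \<in> set xs then 1 else 0)"
  by (induction xs) auto

lemma min_card: assumes A: "A \<subseteq> S" and x: "x \<in> lists A"
  and mn: "\<And>y. y \<in> lists A \<Longrightarrow> wp y = wp x \<Longrightarrow> length x \<le> length y"
  shows "Ng (wp x) = set (rl G x)" "card (Ng (wp x)) = length x"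
proof -
  have d: "distinct (rl G x)" using min_distinct[OF A x mn] .
  have xS: "x \<in> lists S" using x A by auto
  have "set (rl G x) \<subseteq> carrier G" using rl_carr xS S_carr by auto
  then show e: "Ng (wp x) = set (rl G x)" using Ng_word[OF xS] d
    unfolding par_def by (auto simp: distinct_count)
  show "card (Ng (wp x)) = length x" unfolding e using distinct_card[OF d] by simp
qed

lemma card_le_len: "x \<in> lists S \<Longrightarrow> card (Ng (wp x)) \<le> length x"
  using Ng_sub card_mono[OF finite_set, of _ "rl G x"] card_length[of "rl G x"] by (metis le_trans length_rl)

lemma rl_in_gen: assumes "A \<subseteq> S" "x \<in> lists A" shows "set (rl G x) \<subseteq> generate G A"
proof
  fix t assume "t \<in> set (rl G x)"
  then obtain i where i: "i < length x" "t = rl G x ! i" by (metis in_set_conv_nth length_rl)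
  have c: "x \<in> lists (carrier G)" using assms S_carr by auto
  have sg: "subgroup (generate G A) G" using assms S_carr by (auto intro: generate_is_subgroup)
  have "wp (take i x) \<in> generate G A" using gen_words[OF assms(1)] assms(2)
    by (auto dest: in_set_takeD)
  moreover have "x ! i \<in> generate G A" using assms i by (auto intro: generate.incl)
  ultimately show "t \<in> generate G A" using i rl_nth[OF c i(1)] sg
    unfolding cj_def by (auto intro: subgroup.m_closed subgroup.m_inv_closed)
qed

lemma min_word: assumes "A \<subseteq> S" "g \<in> generate G A"
  shows "\<exists>x. x \<in> lists A \<and> wp x = g \<and> (\<forall>y. y \<in> lists A \<and> wp y = g \<longrightarrow> length x \<le> length y)"
proof -
  obtain x0 where "x0 \<in> lists A \<and> wp x0 = g" using gen_words[OF assms(1)] assms(2) by auto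
  then show ?thesis using ex_has_least_nat[of "\<lambda>x. x \<in> lists A \<and> wp x = g" x0 length] by blast
qed


lemma cj_inj: "x \<in> carrier G \<Longrightarrow> inj_on (cj G x) (carrier G)"
proof -
  assume xc: "x \<in> carrier G"
  show ?thesis unfolding inj_on_def
  proof (intro ballI impI)
    fix a b assume ab: "a \<in> carrier G" "b \<in> carrier G" "cj G x a = cj G x b"
    have ca: "cj G x a \<in> carrier G" and cb: "cj G x b \<in> carrier G" using xc ab by auto
    have "a = cj G (inv x) (cj G x a)" using cj_eq_iff[OF xc ab(1) ca] by simp
    moreover have "b = cj G (inv x) (cj G x b)" using cj_eq_iff[OF xc ab(2) cb] by simp
    ultimately show "a = b" using ab(3) by simp
  qed
qed

lemma cj_sub: "subgroup H G \<Longrightarrow> g \<in> H \<Longrightarrow> t \<in> H \<Longrightarrow> cj G g t \<in> H"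
  unfolding cj_def by (intro subgroup.m_closed subgroup.m_inv_closed) auto

lemma cj_sub_inv: "subgroup H G \<Longrightarrow> g \<in> H \<Longrightarrow> t \<in> H \<Longrightarrow> cj G (inv g) t \<in> H"
  using cj_sub subgroup.m_inv_closed by metis

lemma key: assumes J: "J \<subseteq> S" and g0: "g0 \<in> carrier G"
  shows "\<exists>y\<in>generate G J. \<forall>r\<in>S. cj G (y \<otimes> g0) r \<in> generate G J \<longrightarrow> cj G (y \<otimes> g0) r \<in> J"
proof -
  let ?H = "generate G J"
  have sg: "subgroup ?H G" using J S_carr by (auto intro: generate_is_subgroup)
  have Hc: "?H \<subseteq> carrier G" using subgroup.subset[OF sg] .
  obtain y where y: "y \<in> ?H" and ymin: "\<And>z. z \<in> ?H \<Longrightarrow> card (Ng (y \<otimes> g0)) \<le> card (Ng (z \<otimes> g0))"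
    using ex_has_least_nat[of "\<lambda>z. z \<in> ?H" "\<one>" "\<lambda>z. card (Ng (z \<otimes> g0))"] generate.one
    by blast
  define g where "g = y \<otimes> g0"
  have yc: "y \<in> carrier G" using y Hc by auto
  have gc: "g \<in> carrier G" using yc g0 unfolding g_def by simp
  have gmin: "card (Ng g) \<le> card (Ng (z \<otimes> g))" if "z \<in> ?H" for z
  proof -
    have "z \<otimes> g = (z \<otimes> y) \<otimes> g0" using that Hc yc g0 unfolding g_def by (simp add: m_assoc subsetD)
    moreover have "z \<otimes> y \<in> ?H" using that y subgroup.m_closed[OF sg] by simp
    ultimately show ?thesis using ymin unfolding g_def by simp
  qed
  have disj: "u \<notin> Ng g" if u: "u \<in> ?H" for u
  proof
    assume uN: "u \<in> Ng g"
    obtain xg where xg: "xg \<in> lists S" "wp xg = g" and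
      xmin: "\<And>z. z \<in> lists S \<and> wp z = g \<longrightarrow> length xg \<le> length z"
      using min_word[of S g] gen_S gc by auto
    have NE: "Ng g = set (rl G xg)" "card (Ng g) = length xg"
      using min_card[of S xg] xg xmin by auto
    obtain i where i: "i < length xg" "u = rl G xg ! i" using uN NE by (metis in_set_conv_nth length_rl)
    have "u \<otimes> g = wp (take i xg @ drop (Suc i) xg)" using del_letter[OF xg(1) i(1)] i xg by simp
    moreover have "take i xg @ drop (Suc i) xg \<in> lists S" using xg by auto
    ultimately have "card (Ng (u \<otimes> g)) \<le> length xg - 1"
      using card_le_len[of "take i xg @ drop (Suc i) xg"] i by simp
    moreover have "card (Ng g) \<le> card (Ng (u \<otimes> g))" using gmin u by simp
    ultimately show False using NE i by simp
  qed
  have "\<forall>r\<in>S. cj G g r \<in> ?H \<longrightarrow> cj G g r \<in> J"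
  proof (intro ballI impI)
    fix r assume r: "r \<in> S" and xH: "cj G g r \<in> ?H"
    define x where "x = cj G g r"
    have rc: "r \<in> carrier G" using r S_carr by auto
    have xc: "x \<in> carrier G" using gc rc unfolding x_def by simp
    have xH': "x \<in> ?H" using xH unfolding x_def .
    have xnot: "x \<notin> Ng g" using disj xH' by simp
    have N1: "Ng (g \<otimes> r) = insert x (Ng g)"
    proof (rule Set.set_eqI)
      fix t
      show "t \<in> Ng (g \<otimes> r) \<longleftrightarrow> t \<in> insert x (Ng g)"
      proof (cases "t \<in> carrier G")
        case True
        have A: "(cj G g r = t) = (r = cj G (inv g) t)" using cj_eq_iff[OF gc rc True] .
        have "(cj G (inv g) t = r) = (t = x)" unfolding x_def using A by metis
        then have "(cj G (inv g) t \<in> Ng r) = (t = x)" using Ng_gen[OF r] by simp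
        then show ?thesis using Ng_mult[OF gc rc True] xnot by auto
      next
        case False then show ?thesis using Ng_carr xc by auto
      qed
    qed
    have gr: "g \<otimes> r = x \<otimes> g" using gc rc unfolding x_def cj_def by (simp add: m_assoc)
    obtain z where z: "z \<in> lists J" "wp z = x" and
      zmin: "\<And>w. w \<in> lists J \<and> wp w = x \<longrightarrow> length z \<le> length w"
      using min_word[OF J xH'] by auto
    have NX: "Ng x = set (rl G z)" "card (Ng x) = length z"
      using min_card[OF J z(1)] z zmin by auto
    have NxH: "Ng x \<subseteq> ?H" using NX rl_in_gen[OF J z(1)] by simp
    have N2: "Ng (x \<otimes> g) = Ng x \<union> cj G x ` Ng g"
    proof (rule Set.set_eqI)
      fix t
      show "t \<in> Ng (x \<otimes> g) \<longleftrightarrow> t \<in> Ng x \<union> cj G x ` Ng g"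
      proof (cases "t \<in> carrier G")
        case True
        have im: "t \<in> cj G x ` Ng g \<longleftrightarrow> cj G (inv x) t \<in> Ng g"
        proof
          assume "t \<in> cj G x ` Ng g"
          then obtain v where v: "v \<in> Ng g" "t = cj G x v" by auto
          then have vc: "v \<in> carrier G" using Ng_carr by auto
          have "v = cj G (inv x) t" using cj_eq_iff[OF xc vc True] v by simp
          then show "cj G (inv x) t \<in> Ng g" using v by simp
        next
          assume "cj G (inv x) t \<in> Ng g"
          moreover have "t = cj G x (cj G (inv x) t)"
          proof -
            have "cj G (inv x) t \<in> carrier G" using xc True by simp
            then show ?thesis using cj_eq_iff[OF xc _ True, of "cj G (inv x) t"] by simp
          qed
          ultimately show "t \<in> cj G x ` Ng g" by blast
        qed
        have "t \<in> Ng x \<Longrightarrow> cj G (inv x) t \<notin> Ng g"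
        proof -
          assume "t \<in> Ng x"
          then have "t \<in> ?H" using NxH by auto
          then have "cj G (inv x) t \<in> ?H" using xH' sg cj_sub_inv by blast
          then show ?thesis using disj by blast
        qed
        then show ?thesis using Ng_mult[OF xc gc True] im by auto
      next
        case False
        have "t \<notin> cj G x ` Ng g" using False Ng_carr xc cj_carr by blast
        then show ?thesis using Ng_carr False by auto
      qed
    qed
    have fin: "finite (Ng g)" "finite (Ng x)" using Ng_finite gc xc by auto
    have "Ng x \<inter> cj G x ` Ng g = {}"
    proof -
      have "cj G x ` Ng g \<inter> ?H = {}"
      proof (rule ccontr)
        assume "cj G x ` Ng g \<inter> ?H \<noteq> {}"
        then obtain v where v: "v \<in> Ng g" "cj G x v \<in> ?H" by auto
        have vc: "v \<in> carrier G" using v Ng_carr by auto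
        have "cj G x v \<in> carrier G" using xc vc by simp
        then have "v = cj G (inv x) (cj G x v)" using cj_eq_iff[OF xc vc, of "cj G x v"] by simp
        moreover have "cj G (inv x) (cj G x v) \<in> ?H" using v xH' sg cj_sub_inv by blast
        ultimately show False using disj v by auto
      qed
      then show ?thesis using NxH by auto
    qed
    moreover have "card (cj G x ` Ng g) = card (Ng g)"
      using card_image[OF inj_on_subset[OF cj_inj[OF xc] Ng_carr]] .
    ultimately have "card (Ng (x \<otimes> g)) = card (Ng x) + card (Ng g)"
      unfolding N2 using fin by (simp add: card_Un_disjoint)
    moreover have "card (Ng (g \<otimes> r)) = card (Ng g) + 1" unfolding N1 using fin xnot by simp
    ultimately have "card (Ng x) = 1" using gr by simp
    then have "length z = 1" using NX by simp
    then obtain j where "z = [j]" by (metis One_nat_def length_0_conv length_Suc_conv)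
    then have "x = j" "j \<in> J" using z J S_carr by auto
    then show "cj G g r \<in> J" unfolding x_def by simp
  qed
  then show ?thesis using y unfolding g_def by blast
qed


lemma refl_in_Ng: assumes "g0 \<in> carrier G" "s0 \<in> S" shows "cj G g0 s0 \<in> Ng (cj G g0 s0)"
proof -
  let ?b = "cj G g0 s0"
  have s0c: "s0 \<in> carrier G" using assms S_carr by auto
  have bc: "?b \<in> carrier G" using assms s0c by simp
  have ig: "inv g0 \<in> carrier G" using assms by simp
  have bdef: "?b = (g0 \<otimes> s0) \<otimes> inv g0" unfolding cj_def ..
  have c1: "cj G (inv g0) ?b = s0" using assms s0c by (simp add: cj_cj)
  have c2: "cj G (inv (g0 \<otimes> s0)) ?b = s0"
  proof -
    have "cj G (inv (g0 \<otimes> s0)) ?b = cj G (inv (g0 \<otimes> s0) \<otimes> g0) s0"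
      using assms s0c by (simp add: cj_cj)
    also have "inv (g0 \<otimes> s0) \<otimes> g0 = inv s0" using assms s0c by (simp add: inv_mult_group m_assoc)
    also have "cj G (inv s0) s0 = s0" using S_inv[OF assms(2)] S_sq[OF assms(2)] s0c by (simp add: cj_def)
    finally show ?thesis .
  qed
  have "?b \<in> Ng ((g0 \<otimes> s0) \<otimes> inv g0) \<longleftrightarrow> (?b \<in> Ng (g0 \<otimes> s0)) \<noteq> (s0 \<in> Ng (inv g0))"
    using Ng_mult[of "g0 \<otimes> s0" "inv g0" ?b] assms s0c bc c2 by simp
  moreover have "?b \<in> Ng (g0 \<otimes> s0) \<longleftrightarrow> \<not> (?b \<in> Ng g0)"
    using Ng_mult[of g0 s0 ?b] assms s0c bc c1 Ng_gen[OF assms(2)] by simp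
  moreover have "?b \<in> Ng g0 \<longleftrightarrow> s0 \<in> Ng (inv g0)"
    using Ng_mult[of g0 "inv g0" ?b] assms bc c1 Ng_one by simp
  ultimately show ?thesis using bdef by simp
qed

end

lemma conj_set_cj: "conj_set G Y = {cj G g x | g x. g \<in> carrier G \<and> x \<in> Y}"
  unfolding conj_set_def cj_def by simp

lemma cj_sub_struct: "cj (G\<lparr>carrier := H\<rparr>) g x = g \<otimes>\<^bsub>G\<^esub> x \<otimes>\<^bsub>G\<^esub> inv\<^bsub>G\<lparr>carrier := H\<rparr>\<^esub> g"
  unfolding cj_def by simp

theorem lemma9p1:
  fixes W :: "('a, 'b) monoid_scheme" and S S' B B' :: "'a set"
  assumes "coxeter_system W S"
    and "finite S"
    and "coxeter_system W S'"
    and "S' \<subseteq> conj_set W S"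
    and "sharp_angled W S S'"
    and "B \<subseteq> S" and "B' \<subseteq> S'"
    and "generate W B = generate W B'"
  shows "B' \<subseteq> conj_set (W\<lparr>carrier := generate W B\<rparr>) B
         \<and> sharp_angled (W\<lparr>carrier := generate W B\<rparr>) B B'"
proof -
  have grp: "group W" using assms(1) unfolding coxeter_system_def by simp
  interpret cS: coxsys W S using grp assms(1) by (simp add: coxsys_def coxsys_axioms_def)
  interpret cT: coxsys W S' using grp assms(3) by (simp add: coxsys_def coxsys_axioms_def)
  let ?H = "generate W B"
  have sg: "subgroup ?H W" using assms(6) cS.S_carr by (auto intro: cS.generate_is_subgroup)
  have Hc: "?H \<subseteq> carrier W" using subgroup.subset[OF sg] .
  have minv: "inv\<^bsub>W\<lparr>carrier := ?H\<rparr>\<^esub> g = inv\<^bsub>W\<^esub> g" if "g \<in> ?H" for g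
    using cS.m_inv_consistent[OF sg that] .
  have cjH: "cj (W\<lparr>carrier := ?H\<rparr>) g x = cj W g x" if "g \<in> ?H" for g x
    using minv[OF that] unfolding cj_def by simp
  have part1: "B' \<subseteq> conj_set (W\<lparr>carrier := ?H\<rparr>) B"
  proof
    fix b assume bB: "b \<in> B'"
    then have "b \<in> conj_set W S" using assms(4,7) by auto
    then obtain g0 s0 where g0: "g0 \<in> carrier W" "s0 \<in> S" "b = cj W g0 s0"
      unfolding conj_set_cj by auto
    have bN: "b \<in> cS.Ng b" using cS.refl_in_Ng[OF g0(1,2)] g0(3) by simp
    have "b \<in> generate W B'" using bB by (auto intro: generate.incl)
    then have "b \<in> ?H" using assms(8) by simp
    then obtain y where y: "y \<in> lists B" "cS.wp y = b" using cS.gen_words[OF assms(6)] by auto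
    have yS: "y \<in> lists S" using y assms(6) by auto
    have yc: "y \<in> lists (carrier W)" using yS cS.S_carr by auto
    have "b \<in> set (rl W y)" using cS.Ng_sub[OF yS] bN y by auto
    then obtain i where i: "i < length y" "b = rl W y ! i" by (metis in_set_conv_nth cS.length_rl)
    have bi: "b = cj W (cS.wp (take i y)) (y ! i)" using i cS.rl_nth[OF yc i(1)] by simp
    have "take i y \<in> lists B" using y(1) by simp
    then have pH: "cS.wp (take i y) \<in> ?H" using cS.gen_words[OF assms(6)] by blast
    have yiB: "y ! i \<in> B" using y i by auto
    show "b \<in> conj_set (W\<lparr>carrier := ?H\<rparr>) B"
      unfolding conj_set_cj
    proof (intro CollectI exI conjI)
      show "b = cj (W\<lparr>carrier := ?H\<rparr>) (cS.wp (take i y)) (y ! i)" using bi cjH[OF pH] by simp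
    qed (use pH yiB in auto)
  qed
  have part2: "sharp_angled (W\<lparr>carrier := ?H\<rparr>) B B'"
    unfolding sharp_angled_def
  proof (intro ballI impI)
    fix s t assume s: "s \<in> B" and t: "t \<in> B"
      and m: "2 < cox_m (W\<lparr>carrier := ?H\<rparr>) s t \<and> cox_m (W\<lparr>carrier := ?H\<rparr>) s t \<noteq> 0"
    have "cox_m (W\<lparr>carrier := ?H\<rparr>) s t = cox_m W s t"
    proof -
      have g2: "group (W\<lparr>carrier := ?H\<rparr>)" using subgroup.subgroup_is_group[OF sg grp] .
      show ?thesis
        unfolding cox_m_def group.ord_def[OF g2] group.ord_def[OF grp]
        by (simp add: nat_pow_def)
    qed
    then have m': "2 < cox_m W s t \<and> cox_m W s t \<noteq> 0" using m by simp
    have sS: "s \<in> S" "t \<in> S" using s t assms(6) by auto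
    obtain w where w: "w \<in> carrier W" "cj W w s \<in> S'" "cj W w t \<in> S'"
      using assms(5) sS m' unfolding sharp_angled_def cj_def by blast
    have iw: "inv\<^bsub>W\<^esub> w \<in> carrier W" using w by simp
    obtain y where y: "y \<in> generate W B'"
      and yk: "\<forall>r\<in>S'. cj W (y \<otimes>\<^bsub>W\<^esub> inv\<^bsub>W\<^esub> w) r \<in> generate W B' \<longrightarrow>
                cj W (y \<otimes>\<^bsub>W\<^esub> inv\<^bsub>W\<^esub> w) r \<in> B'"
      using cT.key[OF assms(7) iw] by blast
    have yH: "y \<in> ?H" using y assms(8) by simp
    have yc: "y \<in> carrier W" using yH Hc by auto
    have sH: "s \<in> ?H" "t \<in> ?H" using s t by (auto intro: generate.incl)
    have sc: "s \<in> carrier W" "t \<in> carrier W" using sH Hc by auto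
    have red: "cj W (y \<otimes>\<^bsub>W\<^esub> inv\<^bsub>W\<^esub> w) (cj W w u) = cj W y u" if "u \<in> carrier W" for u
      using that w yc iw by (simp add: cS.cj_cj cS.m_assoc)
    have "cj W y s \<in> B'" using yk w(2) red[OF sc(1)] cS.cj_sub[OF sg yH sH(1)] assms(8) by auto
    moreover have "cj W y t \<in> B'" using yk w(3) red[OF sc(2)] cS.cj_sub[OF sg yH sH(2)] assms(8) by auto
    ultimately show "\<exists>w\<in>carrier (W\<lparr>carrier := ?H\<rparr>).
       w \<otimes>\<^bsub>W\<lparr>carrier := ?H\<rparr>\<^esub> s \<otimes>\<^bsub>W\<lparr>carrier := ?H\<rparr>\<^esub> inv\<^bsub>W\<lparr>carrier := ?H\<rparr>\<^esub> w \<in> B' \<and>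
       w \<otimes>\<^bsub>W\<lparr>carrier := ?H\<rparr>\<^esub> t \<otimes>\<^bsub>W\<lparr>carrier := ?H\<rparr>\<^esub> inv\<^bsub>W\<lparr>carrier := ?H\<rparr>\<^esub> w \<in> B'"
      using yH minv[OF yH] unfolding cj_def by (intro bexI[of _ y]) auto
  qed
  show ?thesis using part1 part2 by simp
qed

end
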